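(* Let $M^3$ be a real hypersurface in $\mathbb{C}P^2$ or $\mathbb{C}H^2$ and $p\in M$. If $AW\ne\alpha W$ at $p$, write $AW=\alpha W+\beta X$ with $\beta>0$ and $X\in W^\perp$ a unit vector; if $AW=\alpha W$ at $p$, let $X$ be any unit principal vector in $W^\perp$ and set $\beta=0$. Let $Y=\varphi X$, $\lambda=\langle AX,X\rangle$, $\mu=\langle AX,Y\rangle$, $\nu=\langle AY,Y\rangle$ (so $\mu=0$ in the second case). Then $(R(X,Y)\cdot S)X$ and $(R(X,Y)\cdot S)Y$ are multiples of $W$ at $p$ if and only if $\mu=0$ and $$\beta^2\nu^2=-(4c+\lambda\nu)\big(\alpha(\lambda-\nu)-\beta^2\big).$$
   Context: $\mathbb{C}P^2$, $\mathbb{C}H^2$ carry Kähler metrics of constant holomorphic sectional curvature $4c\ne0$, complex structure $J$, connection $\widetilde\nabla$. For a real hypersurface $M$ with unit normal $\xi$: $W$ with $JW=\xi$; $W^\perp$ the holomorphic distribution; $\varphi X=JX-\langle X,W\rangle\xi$; $AX=-\widetilde\nabla_X\xi$; $\alpha=\langle AW,W\rangle$; $R$ the curvature tensor of $M$; $S$ the Ricci tensor, $\langle SX,Y\rangle=\operatorname{trace}\{Z\mapsto R(Z,X)Y\}$; $R(X,Y)\cdot S=R(X,Y)\circ S-S\circ R(X,Y)$. *)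

theory Defs
  imports "HOL-Analysis.Analysis"
begin

text \<open>Pointwise (algebraic) model of a real hypersurface M^3 in a complex space form
  of constant holomorphic sectional curvature 4c at a point p.  The tangent space
  T_pM is a 3-dimensional Euclidean space 'a; W is the structure vector, phi the
  structure tensor (phi X = JX - <X,W> xi), A the shape operator.\<close>

definition ambient_structure :: "'a::euclidean_space \<Rightarrow> ('a \<Rightarrow> 'a) \<Rightarrow> bool" where
  "ambient_structure W phi \<longleftrightarrow>
     norm W = 1 \<and> linear phi \<and> phi W = 0 \<and>
     (\<forall>u. phi (phi u) = - u + (u \<bullet> W) *\<^sub>R W) \<and>
     (\<forall>u v. phi u \<bullet> v = - (u \<bullet> phi v))"

definition shape_operator :: "('a::euclidean_space \<Rightarrow> 'a) \<Rightarrow> bool" where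
  "shape_operator A \<longleftrightarrow> linear A \<and> (\<forall>u v. A u \<bullet> v = u \<bullet> A v)"

text \<open>Gauss equation: curvature tensor R(X,Y)Z of M.\<close>
definition curv :: "real \<Rightarrow> ('a::euclidean_space \<Rightarrow> 'a) \<Rightarrow> ('a \<Rightarrow> 'a) \<Rightarrow> 'a \<Rightarrow> 'a \<Rightarrow> 'a \<Rightarrow> 'a" where
  "curv c phi A X Y Z =
     c *\<^sub>R ((Y \<bullet> Z) *\<^sub>R X - (X \<bullet> Z) *\<^sub>R Y + (phi Y \<bullet> Z) *\<^sub>R phi X
            - (phi X \<bullet> Z) *\<^sub>R phi Y - (2 * (phi X \<bullet> Y)) *\<^sub>R phi Z)
     + (A Y \<bullet> Z) *\<^sub>R A X - (A X \<bullet> Z) *\<^sub>R A Y"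

definition ricci :: "real \<Rightarrow> ('a::euclidean_space \<Rightarrow> 'a) \<Rightarrow> ('a \<Rightarrow> 'a) \<Rightarrow> 'a \<Rightarrow> 'a" where
  "ricci c phi A X = (\<Sum>b\<in>Basis. (\<Sum>e\<in>Basis. curv c phi A e X b \<bullet> e) *\<^sub>R b)"

definition curv_dot_ricci :: "real \<Rightarrow> ('a::euclidean_space \<Rightarrow> 'a) \<Rightarrow> ('a \<Rightarrow> 'a) \<Rightarrow> 'a \<Rightarrow> 'a \<Rightarrow> 'a \<Rightarrow> 'a" where
  "curv_dot_ricci c phi A X Y Z =
     curv c phi A X Y (ricci c phi A Z) - ricci c phi A (curv c phi A X Y Z)"

end

theory Submission imports Defs begin
lemma span3:
  fixes W X Y v :: "'a::euclidean_space"
  assumes "DIM('a) = 3" "W \<bullet> W = 1" "X \<bullet> X = 1" "Y \<bullet> Y = 1"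
    "W \<bullet> X = 0" "W \<bullet> Y = 0" "X \<bullet> Y = 0"
  shows "v = (v \<bullet> W) *\<^sub>R W + (v \<bullet> X) *\<^sub>R X + (v \<bullet> Y) *\<^sub>R Y"
proof (rule ccontr)
  define d where "d = v - ((v \<bullet> W) *\<^sub>R W + (v \<bullet> X) *\<^sub>R X + (v \<bullet> Y) *\<^sub>R Y)"
  assume "\<not> ?thesis"
  hence d0: "d \<noteq> 0" unfolding d_def by simp
  have dW: "d \<bullet> W = 0" "d \<bullet> X = 0" "d \<bullet> Y = 0" using assms
    by (simp_all add: d_def inner_simps inner_commute)
  have ne: "W \<noteq> 0" "X \<noteq> 0" "Y \<noteq> 0" using assms by auto
  have dist: "W \<noteq> X" "W \<noteq> Y" "X \<noteq> Y" "d \<noteq> W" "d \<noteq> X" "d \<noteq> Y"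
    using assms dW by auto
  have "pairwise orthogonal {W, X, Y, d}"
    using assms dW unfolding pairwise_def orthogonal_def by (auto simp: inner_commute)
  moreover have "0 \<notin> {W, X, Y, d}" using ne d0 by auto
  ultimately have "independent {W, X, Y, d}" by (rule pairwise_orthogonal_independent)
  hence "card {W, X, Y, d} \<le> 3" using independent_bound assms(1) by metis
  moreover have "card {W, X, Y, d} = 4" using dist by auto
  ultimately show False by simp
qed

lemma trace3:
  fixes W X Y :: "'a::euclidean_space" and L :: "'a \<Rightarrow> 'a"
  assumes "DIM('a) = 3" "W \<bullet> W = 1" "X \<bullet> X = 1" "Y \<bullet> Y = 1"
    "W \<bullet> X = 0" "W \<bullet> Y = 0" "X \<bullet> Y = 0" "linear L"
  shows "(\<Sum>e\<in>Basis. L e \<bullet> e) = L W \<bullet> W + L X \<bullet> X + L Y \<bullet> Y"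
proof -
  have "\<And>e. L e \<bullet> e = (e \<bullet> W) * (L W \<bullet> e) + (e \<bullet> X) * (L X \<bullet> e) + (e \<bullet> Y) * (L Y \<bullet> e)"
  proof -
    fix e
    have "L e = L ((e \<bullet> W) *\<^sub>R W + (e \<bullet> X) *\<^sub>R X + (e \<bullet> Y) *\<^sub>R Y)"
      using span3[OF assms(1-7)] by metis
    also have "\<dots> = (e \<bullet> W) *\<^sub>R L W + (e \<bullet> X) *\<^sub>R L X + (e \<bullet> Y) *\<^sub>R L Y"
      using assms(8) by (simp add: linear_add linear_scale)
    finally show "L e \<bullet> e = (e \<bullet> W) * (L W \<bullet> e) + (e \<bullet> X) * (L X \<bullet> e) + (e \<bullet> Y) * (L Y \<bullet> e)"
      by (simp add: inner_simps)
  qed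
  hence "(\<Sum>e\<in>Basis. L e \<bullet> e) = (\<Sum>e\<in>Basis. (L W \<bullet> e) * (W \<bullet> e)) + (\<Sum>e\<in>Basis. (L X \<bullet> e) * (X \<bullet> e))
     + (\<Sum>e\<in>Basis. (L Y \<bullet> e) * (Y \<bullet> e))"
    by (simp add: sum.distrib inner_commute mult.commute)
  also have "\<dots> = L W \<bullet> W + L X \<bullet> X + L Y \<bullet> Y"
    by (simp add: euclidean_inner[symmetric])
  finally show ?thesis .
qed

lemma ricci_inner:
  fixes Z V :: "'a::euclidean_space"
  assumes "linear phi" "linear A" "\<forall>u v. phi u \<bullet> v = - (u \<bullet> phi v)"
  shows "ricci c phi A Z \<bullet> V = (\<Sum>e\<in>Basis. curv c phi A e Z V \<bullet> e)"
proof -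
  define G where "G e = c *\<^sub>R ((e \<bullet> e) *\<^sub>R Z - (Z \<bullet> e) *\<^sub>R e + (phi e \<bullet> e) *\<^sub>R phi Z
     - (phi Z \<bullet> e) *\<^sub>R phi e + (2 * (phi e \<bullet> Z)) *\<^sub>R phi e) + (A e \<bullet> e) *\<^sub>R A Z - (A Z \<bullet> e) *\<^sub>R A e" for e
  have key: "curv c phi A e Z U \<bullet> e = U \<bullet> G e" for e U
  proof -
    have "phi U \<bullet> e = - (U \<bullet> phi e)" by (rule assms(3)[rule_format])
    thus ?thesis unfolding curv_def G_def
      by (simp add: inner_simps inner_commute algebra_simps)
  qed
  have "ricci c phi A Z \<bullet> V = (\<Sum>b\<in>Basis. (\<Sum>e\<in>Basis. curv c phi A e Z b \<bullet> e) * (b \<bullet> V))"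
    unfolding ricci_def by (simp add: inner_sum_left)
  also have "\<dots> = (\<Sum>b\<in>Basis. \<Sum>e\<in>Basis. (b \<bullet> G e) * (b \<bullet> V))"
    by (simp add: key sum_distrib_right)
  also have "\<dots> = (\<Sum>e\<in>Basis. \<Sum>b\<in>Basis. (b \<bullet> G e) * (b \<bullet> V))"
    by (rule sum.swap)
  also have "\<dots> = (\<Sum>e\<in>Basis. V \<bullet> G e)"
  proof (rule sum.cong[OF refl])
    fix e :: 'a
    show "(\<Sum>b\<in>Basis. (b \<bullet> G e) * (b \<bullet> V)) = V \<bullet> G e"
      by (subst euclidean_inner[of V "G e"]) (simp add: inner_commute mult.commute)
  qed
  finally show ?thesis by (simp add: key)
qed

lemma curv_lin1:
  assumes "linear phi" "linear A"
  shows "linear (\<lambda>e. curv c phi A e Z V)"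
  apply (rule linearI)
  using assms unfolding curv_def
  by (simp_all add: linear_add linear_scale algebra_simps inner_simps scaleR_add_right)

theorem proposition9:
  fixes W X :: "'a::euclidean_space" and phi A :: "'a \<Rightarrow> 'a" and c \<beta> :: real
  assumes "DIM('a) = 3"
    and "c \<noteq> 0"
    and "ambient_structure W phi"
    and "shape_operator A"
    and "norm X = 1" and "X \<bullet> W = 0"
    and "\<beta> \<ge> 0"
    and "A W = (A W \<bullet> W) *\<^sub>R W + \<beta> *\<^sub>R X"
    and "\<beta> = 0 \<longrightarrow> (\<exists>l. A X = l *\<^sub>R X)"
  shows "let alpha = A W \<bullet> W; Y = phi X; lam = A X \<bullet> X; mu = A X \<bullet> Y; nu = A Y \<bullet> Y in
    ((\<exists>k. curv_dot_ricci c phi A X Y X = k *\<^sub>R W) \<and>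
     (\<exists>k. curv_dot_ricci c phi A X Y Y = k *\<^sub>R W))
    \<longleftrightarrow> (mu = 0 \<and> \<beta>\<^sup>2 * nu\<^sup>2 = - (4 * c + lam * nu) * (alpha * (lam - nu) - \<beta>\<^sup>2))"
proof -
  define Y where "Y = phi X"
  define a where "a = A W \<bullet> W"
  define b where "b = \<beta>"
  define l where "l = A X \<bullet> X"
  define m where "m = A X \<bullet> Y"
  define n where "n = A Y \<bullet> Y"
  have nW: "norm W = 1" and lphi: "linear phi" and pW: "phi W = 0"
    and pp: "\<And>u. phi (phi u) = - u + (u \<bullet> W) *\<^sub>R W"
    and sk: "\<And>u v. phi u \<bullet> v = - (u \<bullet> phi v)"
    using assms(3) unfolding ambient_structure_def by auto
  have lA: "linear A" and sA: "\<And>u v. A u \<bullet> v = u \<bullet> A v"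
    using assms(4) unfolding shape_operator_def by auto
  have WW: "W \<bullet> W = 1" using nW by (simp add: norm_eq_1)
  have XX: "X \<bullet> X = 1" using assms(5) by (simp add: norm_eq_1)
  have WX: "W \<bullet> X = 0" using assms(6) by (simp add: inner_commute)
  have pX: "phi X = Y" by (simp add: Y_def)
  have pY: "phi Y = - X" using pp[of X] assms(6) by (simp add: Y_def)
  have YY: "Y \<bullet> Y = 1" using sk[of X Y] pY XX by (simp add: Y_def)
  have WY: "W \<bullet> Y = 0" using sk[of X W] pW by (simp add: Y_def inner_commute)
  have XY: "X \<bullet> Y = 0" using sk[of X X] by (simp add: Y_def inner_commute)
  note fr = WW XX YY WX WY XY
  note sp = span3[OF assms(1) fr]
  have AW: "A W = a *\<^sub>R W + b *\<^sub>R X" using assms(8) by (simp add: a_def b_def)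
  have AX: "A X = b *\<^sub>R W + l *\<^sub>R X + m *\<^sub>R Y"
  proof -
    have "A X \<bullet> W = b" using sA[of X W] AW fr by (simp add: inner_simps inner_commute)
    thus ?thesis using sp[of "A X"] by (simp add: l_def m_def)
  qed
  have AY: "A Y = m *\<^sub>R X + n *\<^sub>R Y"
  proof -
    have "A Y \<bullet> W = 0" using sA[of Y W] AW fr by (simp add: inner_simps inner_commute)
    moreover have "A Y \<bullet> X = m" using sA[of Y X] by (simp add: m_def inner_commute)
    ultimately show ?thesis using sp[of "A Y"] by (simp add: n_def)
  qed
  have frc: "X \<bullet> W = 0" "Y \<bullet> W = 0" "Y \<bullet> X = 0" using fr by (simp_all add: inner_commute)
  have pZ: "phi Z \<bullet> W = 0" "phi Z \<bullet> X = - (Z \<bullet> Y)" "phi Z \<bullet> Y = Z \<bullet> X" for Z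
    using sk[of Z W] sk[of Z X] sk[of Z Y] pW pX pY by simp_all
  have AZ: "A Z \<bullet> W = a * (Z \<bullet> W) + b * (Z \<bullet> X)"
           "A Z \<bullet> X = b * (Z \<bullet> W) + l * (Z \<bullet> X) + m * (Z \<bullet> Y)"
           "A Z \<bullet> Y = m * (Z \<bullet> X) + n * (Z \<bullet> Y)" for Z
    using sA[of Z W] sA[of Z X] sA[of Z Y] AW AX AY by (simp_all add: inner_simps)
  have skA: "\<forall>u v. phi u \<bullet> v = - (u \<bullet> phi v)" using sk by blast
  have rho: "ricci c phi A Z \<bullet> V = curv c phi A W Z V \<bullet> W + curv c phi A X Z V \<bullet> X + curv c phi A Y Z V \<bullet> Y" for Z V
    using ricci_inner[OF lphi lA skA, where Z=Z and V=V and c=c] trace3[OF assms(1) fr curv_lin1[OF lphi lA]] by simp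
  define K where "K = 4 * c + l * n - m\<^sup>2"
  define s11 where "s11 = 2 * c + a * (l + n) - b\<^sup>2"
  define s22 where "s22 = 5 * c + l * (a + n) - b\<^sup>2 - m\<^sup>2"
  define s33 where "s33 = 5 * c + n * (a + l) - m\<^sup>2"
  have RZ: "ricci c phi A Z \<bullet> W = s11 * (Z \<bullet> W) + b * n * (Z \<bullet> X) - b * m * (Z \<bullet> Y)"
     "ricci c phi A Z \<bullet> X = b * n * (Z \<bullet> W) + s22 * (Z \<bullet> X) + a * m * (Z \<bullet> Y)"
     "ricci c phi A Z \<bullet> Y = - b * m * (Z \<bullet> W) + a * m * (Z \<bullet> X) + s33 * (Z \<bullet> Y)" for Z
  proof -
    have zc: "W \<bullet> Z = Z \<bullet> W" "X \<bullet> Z = Z \<bullet> X" "Y \<bullet> Z = Z \<bullet> Y" by (simp_all add: inner_commute)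
    show "ricci c phi A Z \<bullet> W = s11 * (Z \<bullet> W) + b * n * (Z \<bullet> X) - b * m * (Z \<bullet> Y)"
      unfolding rho curv_def s11_def
      by (simp add: inner_simps pW pX pY AW AX AY fr frc pZ AZ zc power2_eq_square algebra_simps)
    show "ricci c phi A Z \<bullet> X = b * n * (Z \<bullet> W) + s22 * (Z \<bullet> X) + a * m * (Z \<bullet> Y)"
      unfolding rho curv_def s22_def
      by (simp add: inner_simps pW pX pY AW AX AY fr frc pZ AZ zc power2_eq_square algebra_simps)
    show "ricci c phi A Z \<bullet> Y = - b * m * (Z \<bullet> W) + a * m * (Z \<bullet> X) + s33 * (Z \<bullet> Y)"
      unfolding rho curv_def s33_def
      by (simp add: inner_simps pW pX pY AW AX AY fr frc pZ AZ zc power2_eq_square algebra_simps)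
  qed
  have CZ: "curv c phi A X Y Z \<bullet> W = m * b * (Z \<bullet> X) + n * b * (Z \<bullet> Y)"
     "curv c phi A X Y Z \<bullet> X = - b * m * (Z \<bullet> W) + K * (Z \<bullet> Y)"
     "curv c phi A X Y Z \<bullet> Y = - b * n * (Z \<bullet> W) - K * (Z \<bullet> X)" for Z
  proof -
    have zc: "W \<bullet> Z = Z \<bullet> W" "X \<bullet> Z = Z \<bullet> X" "Y \<bullet> Z = Z \<bullet> Y" by (simp_all add: inner_commute)
    show "curv c phi A X Y Z \<bullet> W = m * b * (Z \<bullet> X) + n * b * (Z \<bullet> Y)"
      unfolding curv_def K_def
      by (simp add: inner_simps pW pX pY AW AX AY fr frc pZ AZ zc power2_eq_square algebra_simps)
    show "curv c phi A X Y Z \<bullet> X = - b * m * (Z \<bullet> W) + K * (Z \<bullet> Y)"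
      unfolding curv_def K_def
      by (simp add: inner_simps pW pX pY AW AX AY fr frc pZ AZ zc power2_eq_square algebra_simps)
    show "curv c phi A X Y Z \<bullet> Y = - b * n * (Z \<bullet> W) - K * (Z \<bullet> X)"
      unfolding curv_def K_def
      by (simp add: inner_simps pW pX pY AW AX AY fr frc pZ AZ zc power2_eq_square algebra_simps)
  qed
  define E where "E = a * K - b\<^sup>2 * n"
  define F where "F = b\<^sup>2 * (m\<^sup>2 - n\<^sup>2) + K * (a * (n - l) + b\<^sup>2)"
  have T1: "curv_dot_ricci c phi A X Y X \<bullet> X = 2 * m * E"
    unfolding curv_dot_ricci_def inner_diff_left E_def
    by (simp add: CZ RZ fr frc s22_def s33_def power2_eq_square algebra_simps)
  have T2: "curv_dot_ricci c phi A X Y X \<bullet> Y = F"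
    unfolding curv_dot_ricci_def inner_diff_left F_def s22_def s33_def
    by (simp add: CZ RZ fr frc s22_def s33_def power2_eq_square algebra_simps)
  have T3: "curv_dot_ricci c phi A X Y Y \<bullet> X = F"
    unfolding curv_dot_ricci_def inner_diff_left F_def s22_def s33_def
    by (simp add: CZ RZ fr frc s22_def s33_def power2_eq_square algebra_simps)
  have T4: "curv_dot_ricci c phi A X Y Y \<bullet> Y = - 2 * m * E"
    unfolding curv_dot_ricci_def inner_diff_left E_def
    by (simp add: CZ RZ fr frc s22_def s33_def power2_eq_square algebra_simps)
  have mw: "(\<exists>k. V = k *\<^sub>R W) \<longleftrightarrow> V \<bullet> X = 0 \<and> V \<bullet> Y = 0" for V
  proof
    assume "\<exists>k. V = k *\<^sub>R W" then obtain k where "V = k *\<^sub>R W" by blast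
    thus "V \<bullet> X = 0 \<and> V \<bullet> Y = 0" using fr by simp
  next
    assume "V \<bullet> X = 0 \<and> V \<bullet> Y = 0"
    hence "V = (V \<bullet> W) *\<^sub>R W" using sp[of V] by simp
    thus "\<exists>k. V = k *\<^sub>R W" by blast
  qed
  have key: "a * F = 4 * c * a * b\<^sup>2 + E * a * (n - l)"
    unfolding F_def E_def K_def by (simp add: power2_eq_square algebra_simps)
  have main: "(m * E = 0 \<and> F = 0) \<longleftrightarrow> (m = 0 \<and> b\<^sup>2 * n\<^sup>2 = - (4 * c + l * n) * (a * (l - n) - b\<^sup>2))"
  proof
    assume h: "m * E = 0 \<and> F = 0"
    have m0: "m = 0"
    proof (rule ccontr)
      assume mn: "m \<noteq> 0"
      hence E0: "E = 0" using h by simp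
      have b0: "b \<noteq> 0"
      proof
        assume "b = 0"
        then obtain l' where "A X = l' *\<^sub>R X" using assms(9) b_def by blast
        hence "m = 0" using XY by (simp add: m_def)
        thus False using mn by simp
      qed
      have "4 * c * a * b\<^sup>2 = 0" using key h E0 by simp
      hence a0: "a = 0" using assms(2) b0 by simp
      hence "n = 0" using E0 b0 by (simp add: E_def)
      hence "F = 4 * c * b\<^sup>2" using a0 by (simp add: F_def K_def algebra_simps)
      thus False using h assms(2) b0 by simp
    qed
    moreover have "b\<^sup>2 * n\<^sup>2 = - (4 * c + l * n) * (a * (l - n) - b\<^sup>2)"
      using h m0 by (simp add: F_def K_def power2_eq_square algebra_simps)
    ultimately show "m = 0 \<and> b\<^sup>2 * n\<^sup>2 = - (4 * c + l * n) * (a * (l - n) - b\<^sup>2)" by blast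
  next
    assume h: "m = 0 \<and> b\<^sup>2 * n\<^sup>2 = - (4 * c + l * n) * (a * (l - n) - b\<^sup>2)"
    thus "m * E = 0 \<and> F = 0" by (simp add: F_def K_def power2_eq_square algebra_simps)
  qed
  show ?thesis
    unfolding Let_def Y_def[symmetric] a_def[symmetric] l_def[symmetric] m_def[symmetric] n_def[symmetric]
      b_def[symmetric] mw T1 T2 T3 T4 using main by auto
qed
end
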